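(* Let $\mathcal{C}$ be any category. Let $l : K \to L$, $r : K \to R$, monomorphisms $t_L : L \rightarrowtail L'$, $t_K : K \rightarrowtail K'$, and $l' : K' \to L'$ be such that $L \xleftarrow{l} K \xrightarrow{t_K} K'$ is a pullback of $L \xrightarrow{t_L} L' \xleftarrow{l'} K'$. Let $G_L$ be an object, $\alpha : G_L \to L'$ and $m : L \to G_L$ morphisms such that $L \xleftarrow{1_L} L \xrightarrow{m} G_L$ is a pullback of $L \xrightarrow{t_L} L' \xleftarrow{\alpha} G_L$, and let $G_L \xleftarrow{g_L} G_K \xrightarrow{u'} K'$ be a pullback of $G_L \xrightarrow{\alpha} L' \xleftarrow{l'} K'$. Then there is a unique morphism $v : K \to G_K$ such that $t_K = u' \circ v$. *)

theory Defs
  imports Main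
begin

text \<open>A (possibly large-free, set-based) category: objects of type 'o, arrows of type 'a.
  Comp g f is the composite g after f.\<close>

record ('o, 'a) category_data =
  Ob   :: "'o set"
  Ar   :: "'a set"
  Dom  :: "'a \<Rightarrow> 'o"
  Cod  :: "'a \<Rightarrow> 'o"
  Id   :: "'o \<Rightarrow> 'a"
  Comp :: "'a \<Rightarrow> 'a \<Rightarrow> 'a"

definition hom :: "('o, 'a) category_data \<Rightarrow> 'o \<Rightarrow> 'o \<Rightarrow> 'a set" where
  "hom C X Y = {f \<in> Ar C. Dom C f = X \<and> Cod C f = Y}"

definition category :: "('o, 'a) category_data \<Rightarrow> bool" where
  "category C \<longleftrightarrow>
     (\<forall>f \<in> Ar C. Dom C f \<in> Ob C \<and> Cod C f \<in> Ob C) \<and>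
     (\<forall>X \<in> Ob C. Id C X \<in> hom C X X) \<and>
     (\<forall>f \<in> Ar C. \<forall>g \<in> Ar C. Cod C f = Dom C g \<longrightarrow>
         Comp C g f \<in> hom C (Dom C f) (Cod C g)) \<and>
     (\<forall>f \<in> Ar C. Comp C f (Id C (Dom C f)) = f \<and> Comp C (Id C (Cod C f)) f = f) \<and>
     (\<forall>f \<in> Ar C. \<forall>g \<in> Ar C. \<forall>h \<in> Ar C. Cod C f = Dom C g \<longrightarrow> Cod C g = Dom C h \<longrightarrow>
         Comp C h (Comp C g f) = Comp C (Comp C h g) f)"

definition mono_arr :: "('o, 'a) category_data \<Rightarrow> 'a \<Rightarrow> bool" where
  "mono_arr C f \<longleftrightarrow> f \<in> Ar C \<and>
     (\<forall>g \<in> Ar C. \<forall>h \<in> Ar C. Cod C g = Dom C f \<longrightarrow> Cod C h = Dom C f \<longrightarrow>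
        Dom C g = Dom C h \<longrightarrow> Comp C f g = Comp C f h \<longrightarrow> g = h)"

definition is_pullback :: "('o, 'a) category_data \<Rightarrow> 'a \<Rightarrow> 'a \<Rightarrow> 'a \<Rightarrow> 'a \<Rightarrow> bool" where
  "is_pullback C p1 p2 f g \<longleftrightarrow>
     p1 \<in> Ar C \<and> p2 \<in> Ar C \<and> f \<in> Ar C \<and> g \<in> Ar C \<and>
     Dom C p1 = Dom C p2 \<and> Cod C p1 = Dom C f \<and> Cod C p2 = Dom C g \<and> Cod C f = Cod C g \<and>
     Comp C f p1 = Comp C g p2 \<and>
     (\<forall>q1 \<in> Ar C. \<forall>q2 \<in> Ar C.
        Dom C q1 = Dom C q2 \<and> Cod C q1 = Dom C f \<and> Cod C q2 = Dom C g \<and>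
        Comp C f q1 = Comp C g q2 \<longrightarrow>
        (\<exists>!u. u \<in> hom C (Dom C q1) (Dom C p1) \<and> Comp C p1 u = q1 \<and> Comp C p2 u = q2))"

end

theory Submission
  imports Defs
begin

theorem lemma2:
  fixes C :: "('o, 'a) category_data"
    and K L R L' K' GL GK :: 'o
    and l r tL tK l' \<alpha> m gL u' :: 'a
  assumes "category C"
    and "K \<in> Ob C" "L \<in> Ob C" "R \<in> Ob C" "L' \<in> Ob C" "K' \<in> Ob C" "GL \<in> Ob C" "GK \<in> Ob C"
    and "l \<in> hom C K L" and "r \<in> hom C K R"
    and "tL \<in> hom C L L'" and "mono_arr C tL"
    and "tK \<in> hom C K K'" and "mono_arr C tK"
    and "l' \<in> hom C K' L'"
    and "is_pullback C l tK tL l'"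
    and "\<alpha> \<in> hom C GL L'" and "m \<in> hom C L GL"
    and "is_pullback C (Id C L) m tL \<alpha>"
    and "gL \<in> hom C GK GL" and "u' \<in> hom C GK K'"
    and "is_pullback C gL u' \<alpha> l'"
  shows "\<exists>!v. v \<in> hom C K GK \<and> tK = Comp C u' v"
proof -
  note cat = assms(1)[unfolded category_def]
  have comp: "\<And>f g. f \<in> Ar C \<Longrightarrow> g \<in> Ar C \<Longrightarrow> Cod C f = Dom C g \<Longrightarrow> Comp C g f \<in> hom C (Dom C f) (Cod C g)"
    using cat by blast
  have assoc: "\<And>f g h. f \<in> Ar C \<Longrightarrow> g \<in> Ar C \<Longrightarrow> h \<in> Ar C \<Longrightarrow> Cod C f = Dom C g \<Longrightarrow> Cod C g = Dom C h \<Longrightarrow>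
         Comp C h (Comp C g f) = Comp C (Comp C h g) f"
    using cat by blast
  have idl: "\<And>f. f \<in> Ar C \<Longrightarrow> Comp C (Id C (Cod C f)) f = f" and idr: "\<And>f. f \<in> Ar C \<Longrightarrow> Comp C f (Id C (Dom C f)) = f"
    using cat by blast+
  note P1 = assms(16)[unfolded is_pullback_def]
  note P2 = assms(19)[unfolded is_pullback_def]
  note P3 = assms(22)[unfolded is_pullback_def]
  note H = assms(9,11,13,15,17,18,20,21)[unfolded hom_def mem_Collect_eq]
  have IdL: "Id C L \<in> Ar C" "Dom C (Id C L) = L" "Cod C (Id C L) = L"
    using cat assms(3) unfolding hom_def by auto
  have am: "Comp C \<alpha> m = tL"
    using P2 IdL H idr by metis
  have ml: "Comp C m l \<in> hom C K GL"
  proof -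
    have "Comp C m l \<in> hom C (Dom C l) (Cod C m)" using H by (intro comp) auto
    then show ?thesis using H by simp
  qed
  note Hml = ml[unfolded hom_def mem_Collect_eq]
  have sq: "Comp C \<alpha> (Comp C m l) = Comp C l' tK"
    using assoc[of l m \<alpha>] H am P1 by auto
  have ex1: "\<exists>!u. u \<in> hom C (Dom C (Comp C m l)) (Dom C gL) \<and> Comp C gL u = Comp C m l \<and> Comp C u' u = tK"
  proof -
    have U3: "\<forall>q1 \<in> Ar C. \<forall>q2 \<in> Ar C.
        Dom C q1 = Dom C q2 \<and> Cod C q1 = Dom C \<alpha> \<and> Cod C q2 = Dom C l' \<and>
        Comp C \<alpha> q1 = Comp C l' q2 \<longrightarrow>
        (\<exists>!u. u \<in> hom C (Dom C q1) (Dom C gL) \<and> Comp C gL u = q1 \<and> Comp C u' u = q2)"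
      using P3 by blast
    have c: "Dom C (Comp C m l) = Dom C tK \<and> Cod C (Comp C m l) = Dom C \<alpha> \<and> Cod C tK = Dom C l' \<and>
        Comp C \<alpha> (Comp C m l) = Comp C l' tK" using Hml H sq by simp
    show ?thesis by (rule U3[rule_format, OF Hml[THEN conjunct1] _ c]) (use H in blast)
  qed
  have key: "Comp C gL v = Comp C m l" if v: "v \<in> hom C K GK" "Comp C u' v = tK" for v
  proof -
    note V = v(1)[unfolded hom_def mem_Collect_eq]
    have gv: "Comp C gL v \<in> hom C K GL"
    proof -
      have "Comp C gL v \<in> hom C (Dom C v) (Cod C gL)" using H V by (intro comp) auto
      then show ?thesis using H V by simp
    qed
    note GV = gv[unfolded hom_def mem_Collect_eq]
    have "Comp C \<alpha> (Comp C gL v) = Comp C (Comp C \<alpha> gL) v" using assoc[of v gL \<alpha>] H V by auto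
    also have "\<dots> = Comp C (Comp C l' u') v" using P3 by simp
    also have "\<dots> = Comp C l' (Comp C u' v)" using assoc[of v u' l'] H V by auto
    finally have s2: "Comp C tL l = Comp C \<alpha> (Comp C gL v)" using v(2) P1 by simp
    have "\<exists>!x. x \<in> hom C (Dom C l) (Dom C (Id C L)) \<and> Comp C (Id C L) x = l \<and> Comp C m x = Comp C gL v"
    proof -
      have U2: "\<forall>q1 \<in> Ar C. \<forall>q2 \<in> Ar C.
        Dom C q1 = Dom C q2 \<and> Cod C q1 = Dom C tL \<and> Cod C q2 = Dom C \<alpha> \<and>
        Comp C tL q1 = Comp C \<alpha> q2 \<longrightarrow>
        (\<exists>!u. u \<in> hom C (Dom C q1) (Dom C (Id C L)) \<and> Comp C (Id C L) u = q1 \<and> Comp C m u = q2)"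
        using P2 by blast
      have c: "Dom C l = Dom C (Comp C gL v) \<and> Cod C l = Dom C tL \<and> Cod C (Comp C gL v) = Dom C \<alpha> \<and>
        Comp C tL l = Comp C \<alpha> (Comp C gL v)" using GV H s2 by simp
      show ?thesis by (rule U2[rule_format, OF _ GV[THEN conjunct1] c]) (use H in blast)
    qed
    then obtain x where x: "x \<in> hom C K L" "Comp C (Id C L) x = l" "Comp C m x = Comp C gL v"
      using H IdL by auto
    have "x = l" using x idl[of x] unfolding hom_def by auto
    then show ?thesis using x by simp
  qed
  from ex1 obtain v0 where v0: "v0 \<in> hom C K GK" "Comp C gL v0 = Comp C m l" "Comp C u' v0 = tK"
    using Hml H by auto
  show ?thesis
  proof (rule ex1I[of _ v0])
    show "v0 \<in> hom C K GK \<and> tK = Comp C u' v0" using v0 by simp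
    fix v assume "v \<in> hom C K GK \<and> tK = Comp C u' v"
    then have v: "v \<in> hom C K GK" "Comp C u' v = tK" by auto
    have "Comp C gL v = Comp C m l" using key v by blast
    then show "v = v0" using ex1 v v0 Hml H by (auto simp del: Ex1_def)
  qed
qed

end
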